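(* Let $K$ be a local field whose residue field has size $q$. Every congruence class in $T_\infty(K)/I_q(K)$ has a unique $q$-simplified representative, and if $f\equiv g\bmod I_q(K)$ with $g$ $q$-simplified, then $|f\bmod I_q(K)|_{\mathrm{res}}=|g|$.
   Context: A local field is a field complete with respect to a nontrivial discrete nonarchimedean absolute value with finite residue field. $T_\infty(K)=K\langle X_1,X_2,\dots\rangle$ is the set of formal power series $f=\sum_i a_i\underline X^i$ in countably many indeterminates (indices $i$ ranging over finitely supported sequences of nonnegative integers, $\underline X^i$ the corresponding monomial) such that $a_i\to0$, i.e. for every $\varepsilon>0$ only finitely many $|a_i|\ge\varepsilon$; it is a $K$-algebra normed by $|f|=\sup_i|a_i|$. $I_q(K)$ is the closure of the ideal generated by all $X_j^q-X_j$. For a closed ideal $I$, $|f\bmod I|_{\mathrm{res}}=\inf_{h\in I}|f+h|$. A series is $q$-simplified if in each monomial with nonzero coefficient every exponent is at most $q-1$. *)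

theory Defs
  imports Complex_Main "HOL-Library.Poly_Mapping"
begin

definition residue_field :: "('a::field \<Rightarrow> real) \<Rightarrow> 'a set set" where
  "residue_field absv =
     {x. absv x \<le> 1} // {(x, y). absv x \<le> 1 \<and> absv y \<le> 1 \<and> absv (x - y) < 1}"

definition local_field :: "('a::field \<Rightarrow> real) \<Rightarrow> bool" where
  "local_field absv \<longleftrightarrow>
     (\<forall>x. absv x \<ge> 0) \<and> (\<forall>x. absv x = 0 \<longleftrightarrow> x = 0) \<and>
     (\<forall>x y. absv (x * y) = absv x * absv y) \<and>
     (\<forall>x y. absv (x + y) \<le> max (absv x) (absv y)) \<and>
     (\<exists>x. absv x \<noteq> 0 \<and> absv x \<noteq> 1) \<and>
     (\<exists>c. 0 < c \<and> c < 1 \<and> (\<forall>x. x \<noteq> 0 \<longrightarrow> (\<exists>n::int. absv x = c powi n))) \<and>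
     (\<forall>s::nat \<Rightarrow> 'a. (\<forall>e>0. \<exists>N. \<forall>m\<ge>N. \<forall>n\<ge>N. absv (s m - s n) < e) \<longrightarrow>
        (\<exists>L. \<forall>e>0. \<exists>N. \<forall>n\<ge>N. absv (s n - L) < e)) \<and>
     finite (residue_field absv)"

text \<open>Formal power series in countably many variables X_0, X_1, ...: functions from
  finitely supported exponent sequences (nat =>0 nat) to coefficients.\<close>

type_synonym 'a series = "(nat \<Rightarrow>\<^sub>0 nat) \<Rightarrow> 'a"

definition tate :: "('a::field \<Rightarrow> real) \<Rightarrow> 'a series set" where
  "tate absv = {f. \<forall>e>0. finite {i. absv (f i) \<ge> e}}"

definition snorm :: "('a::field \<Rightarrow> real) \<Rightarrow> 'a series \<Rightarrow> real" where
  "snorm absv f = (SUP i. absv (f i))"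

definition smult_series :: "'a::field series \<Rightarrow> 'a series \<Rightarrow> 'a series" where
  "smult_series f g = (\<lambda>k. \<Sum>p\<in>{p. fst p + snd p = k}. f (fst p) * g (snd p))"

definition sadd :: "'a::field series \<Rightarrow> 'a series \<Rightarrow> 'a series" where
  "sadd f g = (\<lambda>i. f i + g i)"

definition ssub :: "'a::field series \<Rightarrow> 'a series \<Rightarrow> 'a series" where
  "ssub f g = (\<lambda>i. f i - g i)"

definition Xpow :: "nat \<Rightarrow> nat \<Rightarrow> 'a::field series" where
  "Xpow j e = (\<lambda>k. if k = Poly_Mapping.single j e then 1 else 0)"

definition gen_ideal_q :: "('a::field \<Rightarrow> real) \<Rightarrow> nat \<Rightarrow> 'a series set" where
  "gen_ideal_q absv q =
     {f. \<exists>J h. finite J \<and> (\<forall>j\<in>J. h j \<in> tate absv) \<and>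
          f = (\<lambda>k. \<Sum>j\<in>J. smult_series (h j) (ssub (Xpow j q) (Xpow j 1)) k)}"

definition Iq :: "('a::field \<Rightarrow> real) \<Rightarrow> nat \<Rightarrow> 'a series set" where
  "Iq absv q = {f \<in> tate absv. \<forall>e>0. \<exists>g\<in>gen_ideal_q absv q. snorm absv (ssub f g) < e}"

definition res_norm :: "('a::field \<Rightarrow> real) \<Rightarrow> 'a series set \<Rightarrow> 'a series \<Rightarrow> real" where
  "res_norm absv I f = (INF h\<in>I. snorm absv (sadd f h))"

definition q_simplified :: "nat \<Rightarrow> 'a::zero series \<Rightarrow> bool" where
  "q_simplified q g \<longleftrightarrow> (\<forall>i. g i \<noteq> 0 \<longrightarrow> (\<forall>j. Poly_Mapping.lookup i j \<le> q - 1))"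

end

theory Submission
  imports Defs
begin


lemma lf_nonneg: "local_field absv \<Longrightarrow> absv x \<ge> 0"
  by (simp add: local_field_def)
lemma lf_zero: "local_field absv \<Longrightarrow> absv x = 0 \<longleftrightarrow> x = 0"
  by (simp add: local_field_def)
lemma lf_mult: "local_field absv \<Longrightarrow> absv (x * y) = absv x * absv y"
  by (simp add: local_field_def)
lemma lf_ultra: "local_field absv \<Longrightarrow> absv (x + y) \<le> max (absv x) (absv y)"
  by (simp add: local_field_def)
lemma lf_one: "local_field absv \<Longrightarrow> absv 1 = 1"
proof -
  assume a: "local_field absv"
  have "absv 1 = absv 1 * absv 1" using lf_mult[OF a, of 1 1] by simp
  moreover have "absv 1 \<noteq> 0" using lf_zero[OF a, of 1] by simp
  ultimately show ?thesis by (metis mult_cancel_left1)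
qed
lemma lf_minus: "local_field absv \<Longrightarrow> absv (- x) = absv x"
proof -
  assume a: "local_field absv"
  have "absv (-1) * absv (-1) = 1" using lf_mult[OF a, of "-1" "-1"] lf_one[OF a] by simp
  hence "(absv (-1) - 1) * (absv (-1) + 1) = 0" by (simp add: algebra_simps)
  moreover have "absv (-1) + 1 \<noteq> 0" using lf_nonneg[OF a, of "-1"] by simp
  ultimately have "absv (-1) = 1" by simp
  thus ?thesis using lf_mult[OF a, of "-1" x] by simp
qed
lemma lf_diff_comm: "local_field absv \<Longrightarrow> absv (x - y) = absv (y - x)"
  using lf_minus[of absv "x - y"] by simp
lemma lf_ultra_diff: "local_field absv \<Longrightarrow> absv (x - y) \<le> max (absv x) (absv y)"
  using lf_ultra[of absv x "-y"] lf_minus[of absv y] by simp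

lemma lf_sum_le:
  assumes a: "local_field absv" and "\<And>i. i \<in> F \<Longrightarrow> absv (x i) \<le> c" and "0 \<le> c"
  shows "absv (sum x F) \<le> c"
  using assms(2)
proof (induction F rule: infinite_finite_induct)
  case (infinite A) then show ?case using lf_zero[OF a, of 0] assms(3) by simp
next
  case empty then show ?case using lf_zero[OF a, of 0] assms(3) by simp
next
  case (insert y F)
  have h1: "absv (x y) \<le> c" using insert.prems by simp
  have h2: "absv (sum x F) \<le> c" using insert by simp
  have "absv (x y + sum x F) \<le> c" using lf_ultra[OF a, of "x y" "sum x F"] h1 h2 by (metis max.bounded_iff order_trans)
  then show ?case using insert(1,2) by simp
qed

lemma lf_sum_less:
  assumes a: "local_field absv" and "\<And>i. i \<in> F \<Longrightarrow> absv (x i) < c" and "0 < c"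
  shows "absv (sum x F) < c"
  using assms(2)
proof (induction F rule: infinite_finite_induct)
  case (infinite A) then show ?case using lf_zero[OF a, of 0] assms(3) by simp
next
  case empty then show ?case using lf_zero[OF a, of 0] assms(3) by simp
next
  case (insert y F)
  have h1: "absv (x y) < c" using insert.prems by simp
  have h2: "absv (sum x F) < c" using insert by simp
  have "absv (x y + sum x F) < c" using lf_ultra[OF a, of "x y" "sum x F"] h1 h2 by (metis max_less_iff_conj le_less_trans)
  then show ?case using insert(1,2) by simp
qed




lemma tate_bdd:
  assumes a: "local_field absv" and f: "f \<in> tate absv"
  shows "bdd_above (range (\<lambda>i. absv (f i)))"
proof -
  let ?F = "{i. absv (f i) \<ge> 1}"
  have fin: "finite ?F" using f by (simp add: tate_def)
  have "absv (f i) \<le> 1 + sum (\<lambda>i. absv (f i)) ?F" for i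
  proof (cases "i \<in> ?F")
    case True
    then have "absv (f i) \<le> sum (\<lambda>i. absv (f i)) ?F"
      by (rule member_le_sum) (use fin lf_nonneg[OF a] in auto)
    then show ?thesis by simp
  next
    case False
    have "0 \<le> sum (\<lambda>i. absv (f i)) ?F" by (rule sum_nonneg) (use lf_nonneg[OF a] in auto)
    then show ?thesis using False by simp
  qed
  then show ?thesis unfolding bdd_above_def by auto
qed

lemma snorm_ge: "bdd_above (range (\<lambda>i. absv (f i))) \<Longrightarrow> absv (f i) \<le> snorm absv f"
  unfolding snorm_def by (rule cSUP_upper) auto

lemma snorm_le: "(\<And>i. absv (f i) \<le> c) \<Longrightarrow> snorm absv f \<le> c"
  unfolding snorm_def by (rule cSUP_least) auto

lemma bdd_ptwise: "(\<And>i. absv (f i) \<le> c) \<Longrightarrow> bdd_above (range (\<lambda>i. absv (f i)))"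
  unfolding bdd_above_def by auto

lemma tate_add:
  assumes a: "local_field absv" and "f \<in> tate absv" "g \<in> tate absv"
  shows "(\<lambda>i. f i + g i) \<in> tate absv"
  unfolding tate_def
proof (safe)
  fix e :: real assume "e > 0"
  have "{i. e \<le> absv (f i + g i)} \<subseteq> {i. e \<le> absv (f i)} \<union> {i. e \<le> absv (g i)}"
  proof
    fix x assume "x \<in> {i. e \<le> absv (f i + g i)}"
    then show "x \<in> {i. e \<le> absv (f i)} \<union> {i. e \<le> absv (g i)}"
      using lf_ultra[OF a, of "f x" "g x"] by (metis le_max_iff_disj order_trans Un_iff mem_Collect_eq)
  qed
  moreover have "finite ({i. e \<le> absv (f i)} \<union> {i. e \<le> absv (g i)})"
    using assms \<open>e > 0\<close> by (simp add: tate_def)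
  ultimately show "finite {i. e \<le> absv (f i + g i)}" by (rule finite_subset)
qed

lemma tate_scale:
  assumes a: "local_field absv" and f: "f \<in> tate absv"
  shows "(\<lambda>i. c * f i) \<in> tate absv"
  unfolding tate_def
proof (safe)
  fix e :: real assume e: "e > 0"
  show "finite {i. e \<le> absv (c * f i)}"
  proof (cases "c = 0")
    case True then show ?thesis using e lf_zero[OF a, of 0] by simp
  next
    case False
    then have cpos: "absv c > 0" using lf_zero[OF a, of c] lf_nonneg[OF a, of c] by simp
    have "{i. e \<le> absv (c * f i)} = {i. e / absv c \<le> absv (f i)}"
      using cpos by (auto simp: lf_mult[OF a] field_simps)
    moreover have "finite {i. e / absv c \<le> absv (f i)}" using f e cpos by (simp add: tate_def)
    ultimately show ?thesis by simp
  qed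
qed

lemma tate_neg: "local_field absv \<Longrightarrow> f \<in> tate absv \<Longrightarrow> (\<lambda>i. - f i) \<in> tate absv"
  using tate_scale[of absv f "-1"] by simp

lemma tate_sub: "local_field absv \<Longrightarrow> f \<in> tate absv \<Longrightarrow> g \<in> tate absv \<Longrightarrow> ssub f g \<in> tate absv"
  using tate_add[of absv f "\<lambda>i. - g i"] tate_neg[of absv g] by (simp add: ssub_def)

lemma tate_sadd: "local_field absv \<Longrightarrow> f \<in> tate absv \<Longrightarrow> g \<in> tate absv \<Longrightarrow> sadd f g \<in> tate absv"
  using tate_add[of absv f g] by (simp add: sadd_def)

lemma tate_zero: "local_field absv \<Longrightarrow> (\<lambda>i. 0) \<in> tate absv"
  using lf_zero[of absv 0] by (simp add: tate_def)

lemma tate_finsupp: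
  assumes "finite {i. f i \<noteq> 0}" "local_field absv"
  shows "f \<in> tate absv"
  unfolding tate_def
proof safe
  fix e :: real assume "e > 0"
  then have "{i. e \<le> absv (f i)} \<subseteq> {i. f i \<noteq> 0}" using lf_zero[OF assms(2), of 0] by auto
  then show "finite {i. e \<le> absv (f i)}" using assms(1) finite_subset by blast
qed

section \<open>Products with monomials\<close>

lemma finite_le_pm: fixes k :: "nat \<Rightarrow>\<^sub>0 nat" shows "finite {a :: nat \<Rightarrow>\<^sub>0 nat. \<forall>x. Poly_Mapping.lookup a x \<le> Poly_Mapping.lookup k x}"
proof -
  define N where "N = sum (Poly_Mapping.lookup k) (Poly_Mapping.keys k)"
  define K where "K = Poly_Mapping.keys k"
  define B where "B = {f. \<forall>x. (x \<in> K \<longrightarrow> f x \<in> {0..N}) \<and> (x \<notin> K \<longrightarrow> f x = (0::nat))}"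
  have fB: "finite B" unfolding B_def by (rule finite_set_of_finite_funs) (simp_all add: K_def)
  have sub: "Poly_Mapping.lookup ` {a. \<forall>x. Poly_Mapping.lookup a x \<le> Poly_Mapping.lookup k x} \<subseteq> B"
  proof
    fix f assume "f \<in> Poly_Mapping.lookup ` {a. \<forall>x. Poly_Mapping.lookup a x \<le> Poly_Mapping.lookup k x}"
    then obtain a where fa: "f = Poly_Mapping.lookup a" and h: "\<forall>x. Poly_Mapping.lookup a x \<le> Poly_Mapping.lookup k x" by blast
    have "f x \<in> {0..N}" if "x \<in> K" for x
    proof -
      have "Poly_Mapping.lookup k x \<le> N" unfolding N_def
        by (rule member_le_sum) (use that in \<open>simp_all add: K_def\<close>)
      then show ?thesis using h fa by (metis atLeastAtMost_iff le_trans zero_le)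
    qed
    moreover have "f x = 0" if "x \<notin> K" for x
      using that h fa unfolding K_def by (metis Poly_Mapping.in_keys_iff le_zero_eq)
    ultimately show "f \<in> B" unfolding B_def by blast
  qed
  have "finite (Poly_Mapping.lookup ` {a. \<forall>x. Poly_Mapping.lookup a x \<le> Poly_Mapping.lookup k x})"
    using fB sub finite_subset by blast
  then show ?thesis by (rule finite_imageD) (simp add: inj_on_def)
qed

lemma finite_decomp: "finite {p :: (nat \<Rightarrow>\<^sub>0 nat) \<times> (nat \<Rightarrow>\<^sub>0 nat). fst p + snd p = k}"
proof -
  define B where "B = {a :: nat \<Rightarrow>\<^sub>0 nat. \<forall>x. Poly_Mapping.lookup a x \<le> Poly_Mapping.lookup k x}"
  have "{p :: (nat \<Rightarrow>\<^sub>0 nat) \<times> (nat \<Rightarrow>\<^sub>0 nat). fst p + snd p = k} \<subseteq> B \<times> B"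
  proof
    fix p :: "(nat \<Rightarrow>\<^sub>0 nat) \<times> (nat \<Rightarrow>\<^sub>0 nat)"
    assume "p \<in> {p. fst p + snd p = k}"
    then have k: "k = fst p + snd p" by simp
    have "fst p \<in> B" unfolding B_def k by (simp add: Poly_Mapping.lookup_add)
    moreover have "snd p \<in> B" unfolding B_def k by (simp add: Poly_Mapping.lookup_add)
    ultimately show "p \<in> B \<times> B" by (simp add: mem_Times_iff)
  qed
  moreover have "finite (B \<times> B)" using finite_le_pm[of k] unfolding B_def by (intro finite_cartesian_product)
  ultimately show ?thesis using finite_subset by blast
qed
lemma sub_single: "{m :: nat \<Rightarrow>\<^sub>0 nat. m + s = k} = {} \<or> (\<exists>m0. {m. m + s = k} = {m0})"
proof (cases "\<exists>m0. m0 + s = k")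
  case True
  then obtain m0 where "m0 + s = k" by blast
  then have "{m. m + s = k} = {m0}" by auto
  then show ?thesis by blast
qed auto

lemma finite_sub: "finite {m :: nat \<Rightarrow>\<^sub>0 nat. m + s = k}"
  using sub_single[of s k] by auto

lemma smult_Xpow:
  "smult_series h (Xpow j e) k = sum h {m. m + Poly_Mapping.single j e = k}"
proof -
  let ?s = "Poly_Mapping.single j e"
  let ?S = "{p :: (nat \<Rightarrow>\<^sub>0 nat) \<times> (nat \<Rightarrow>\<^sub>0 nat). fst p + snd p = k}"
  have "smult_series h (Xpow j e) k = (\<Sum>p\<in>?S. if snd p = ?s then h (fst p) else 0)"
    unfolding smult_series_def Xpow_def by (intro sum.cong) auto
  also have "\<dots> = (\<Sum>p\<in>{p \<in> ?S. snd p = ?s}. h (fst p))"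
    by (rule sum.inter_filter[symmetric]) (rule finite_decomp)
  also have "{p \<in> ?S. snd p = ?s} = (\<lambda>m. (m, ?s)) ` {m. m + ?s = k}" by auto
  also have "(\<Sum>p\<in>(\<lambda>m. (m, ?s)) ` {m. m + ?s = k}. h (fst p)) = sum h {m. m + ?s = k}"
    by (subst sum.reindex) (auto intro: inj_onI)
  finally show ?thesis .
qed

lemma sum_sub_bound:
  assumes a: "local_field absv" and "\<And>i. absv (h i) \<le> B"
  shows "absv (sum h {m :: nat \<Rightarrow>\<^sub>0 nat. m + s = k}) \<le> B"
proof -
  have "B \<ge> 0" using assms(2)[of 0] lf_nonneg[OF a, of "h 0"] by linarith
  from sub_single[of s k] show ?thesis
  proof
    assume "{m. m + s = k} = {}"
    then show ?thesis using \<open>B \<ge> 0\<close> lf_zero[OF a, of 0] by simp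
  next
    assume "\<exists>m0. {m. m + s = k} = {m0}"
    then obtain m0 where "{m. m + s = k} = {m0}" by blast
    then show ?thesis using assms(2)[of m0] by simp
  qed
qed

lemma smult_Z:
  "smult_series h (ssub (Xpow j q) (Xpow j 1)) k =
     sum h {m. m + Poly_Mapping.single j q = k} - sum h {m. m + Poly_Mapping.single j 1 = k}"
proof -
  have "smult_series h (ssub (Xpow j q) (Xpow j 1)) k =
        smult_series h (Xpow j q) k - smult_series h (Xpow j 1) k"
    unfolding smult_series_def ssub_def by (simp add: sum_subtractf algebra_simps)
  then show ?thesis by (simp add: smult_Xpow)
qed

lemma smult_add1: "smult_series (\<lambda>i. f i + g i) Z k = smult_series f Z k + smult_series g Z k"
  unfolding smult_series_def by (simp add: sum.distrib algebra_simps)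

lemma smult_scale1: "smult_series (\<lambda>i. c * f i) Z k = c * smult_series f Z k"
  unfolding smult_series_def by (simp add: sum_distrib_left algebra_simps)

lemma smult_zero1: "smult_series (\<lambda>i. 0) Z k = 0"
  unfolding smult_series_def by simp

lemma smult_diff1: "smult_series (\<lambda>i. f i - g i) Z k = smult_series f Z k - smult_series g Z k"
  unfolding smult_series_def by (simp add: sum_subtractf algebra_simps)




definition monom_s :: "(nat \<Rightarrow>\<^sub>0 nat) \<Rightarrow> 'a::field series" where
  "monom_s m = (\<lambda>k. if k = m then 1 else 0)"

lemma gen_zero: "local_field absv \<Longrightarrow> (\<lambda>k. 0) \<in> gen_ideal_q absv q"
  unfolding gen_ideal_q_def by (rule CollectI, rule exI[of _ "{}"]) simp

lemma gen_add:
  assumes a: "local_field absv" and f: "f \<in> gen_ideal_q absv q" and g: "g \<in> gen_ideal_q absv q"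
  shows "(\<lambda>k. f k + g k) \<in> gen_ideal_q absv q"
proof -
  obtain J1 h1 where J1: "finite J1" "\<forall>j\<in>J1. h1 j \<in> tate absv"
    and fe: "f = (\<lambda>k. \<Sum>j\<in>J1. smult_series (h1 j) (ssub (Xpow j q) (Xpow j 1)) k)"
    using f unfolding gen_ideal_q_def by blast
  obtain J2 h2 where J2: "finite J2" "\<forall>j\<in>J2. h2 j \<in> tate absv"
    and ge: "g = (\<lambda>k. \<Sum>j\<in>J2. smult_series (h2 j) (ssub (Xpow j q) (Xpow j 1)) k)"
    using g unfolding gen_ideal_q_def by blast
  define h1' where "h1' j = (\<lambda>i. if j \<in> J1 then h1 j i else 0)" for j
  define h2' where "h2' j = (\<lambda>i. if j \<in> J2 then h2 j i else 0)" for j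
  define h where "h j = (\<lambda>i. h1' j i + h2' j i)" for j
  let ?Z = "\<lambda>j. ssub (Xpow j q) (Xpow j 1)"
  have t1: "h1' j \<in> tate absv" for j using J1 tate_zero[OF a] by (cases "j \<in> J1") (auto simp: h1'_def)
  have t2: "h2' j \<in> tate absv" for j using J2 tate_zero[OF a] by (cases "j \<in> J2") (auto simp: h2'_def)
  have th: "\<forall>j\<in>J1 \<union> J2. h j \<in> tate absv" unfolding h_def using tate_add[OF a t1 t2] by blast
  have s1: "(\<Sum>j\<in>J1 \<union> J2. smult_series (h1' j) (?Z j) k) = (\<Sum>j\<in>J1. smult_series (h1 j) (?Z j) k)" for k
  proof -
    have "(\<Sum>j\<in>J1 \<union> J2. smult_series (h1' j) (?Z j) k) = (\<Sum>j\<in>J1 \<union> J2. if j \<in> J1 then smult_series (h1 j) (?Z j) k else 0)"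
      by (rule sum.cong) (auto simp: h1'_def smult_zero1)
    also have "\<dots> = (\<Sum>j\<in>{j \<in> J1 \<union> J2. j \<in> J1}. smult_series (h1 j) (?Z j) k)"
      by (rule sum.inter_filter[symmetric]) (use J1 J2 in auto)
    also have "{j \<in> J1 \<union> J2. j \<in> J1} = J1" by auto
    finally show ?thesis .
  qed
  have s2: "(\<Sum>j\<in>J1 \<union> J2. smult_series (h2' j) (?Z j) k) = (\<Sum>j\<in>J2. smult_series (h2 j) (?Z j) k)" for k
  proof -
    have "(\<Sum>j\<in>J1 \<union> J2. smult_series (h2' j) (?Z j) k) = (\<Sum>j\<in>J1 \<union> J2. if j \<in> J2 then smult_series (h2 j) (?Z j) k else 0)"
      by (rule sum.cong) (auto simp: h2'_def smult_zero1)
    also have "\<dots> = (\<Sum>j\<in>{j \<in> J1 \<union> J2. j \<in> J2}. smult_series (h2 j) (?Z j) k)"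
      by (rule sum.inter_filter[symmetric]) (use J1 J2 in auto)
    also have "{j \<in> J1 \<union> J2. j \<in> J2} = J2" by auto
    finally show ?thesis .
  qed
  have eq: "(\<lambda>k. f k + g k) = (\<lambda>k. \<Sum>j\<in>J1 \<union> J2. smult_series (h j) (?Z j) k)"
  proof
    fix k
    have "(\<Sum>j\<in>J1 \<union> J2. smult_series (h j) (?Z j) k) =
          (\<Sum>j\<in>J1 \<union> J2. smult_series (h1' j) (?Z j) k) + (\<Sum>j\<in>J1 \<union> J2. smult_series (h2' j) (?Z j) k)"
      unfolding h_def smult_add1 sum.distrib ..
    then show "f k + g k = (\<Sum>j\<in>J1 \<union> J2. smult_series (h j) (?Z j) k)"
      using s1 s2 fe ge by simp
  qed
  show ?thesis unfolding gen_ideal_q_def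
    by (rule CollectI, rule exI[of _ "J1 \<union> J2"], rule exI[of _ h]) (use J1(1) J2(1) th eq in simp)
qed

lemma gen_scale:
  assumes a: "local_field absv" and f: "f \<in> gen_ideal_q absv q"
  shows "(\<lambda>k. c * f k) \<in> gen_ideal_q absv q"
proof -
  obtain J h where J: "finite J" "\<forall>j\<in>J. h j \<in> tate absv"
    and fe: "f = (\<lambda>k. \<Sum>j\<in>J. smult_series (h j) (ssub (Xpow j q) (Xpow j 1)) k)"
    using f unfolding gen_ideal_q_def by blast
  have eq: "(\<lambda>k. c * f k) = (\<lambda>k. \<Sum>j\<in>J. smult_series (\<lambda>i. c * h j i) (ssub (Xpow j q) (Xpow j 1)) k)"
    unfolding fe smult_scale1 sum_distrib_left ..
  have th: "\<forall>j\<in>J. (\<lambda>i. c * h j i) \<in> tate absv" using J tate_scale[OF a] by blast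
  show ?thesis unfolding gen_ideal_q_def
    by (rule CollectI, rule exI[of _ J], rule exI[of _ "\<lambda>j i. c * h j i"]) (use J(1) th eq in simp)
qed

lemma gen_sub:
  assumes a: "local_field absv" and f: "f \<in> gen_ideal_q absv q" and g: "g \<in> gen_ideal_q absv q"
  shows "(\<lambda>k. f k - g k) \<in> gen_ideal_q absv q"
  using gen_add[OF a f gen_scale[OF a g, of "-1"]] by simp

lemma gen_sum:
  assumes a: "local_field absv" and "finite A" and "\<And>i. i \<in> A \<Longrightarrow> F i \<in> gen_ideal_q absv q"
  shows "(\<lambda>k. \<Sum>i\<in>A. F i k) \<in> gen_ideal_q absv q"
  using assms(2,3)
proof (induction A rule: finite_induct)
  case empty then show ?case using gen_zero[OF a] by simp
next
  case (insert x A)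
  have "(\<lambda>k. F x k + (\<Sum>i\<in>A. F i k)) \<in> gen_ideal_q absv q"
    using gen_add[OF a, of "F x" q "\<lambda>k. \<Sum>i\<in>A. F i k"] insert by simp
  then show ?case using insert(1,2) by simp
qed

lemma sum_monom: "finite A \<Longrightarrow> sum (monom_s m) A = (if m \<in> A then 1 else 0)"
  unfolding monom_s_def by (simp add: sum.delta')

lemma smult_monom_Xpow: "smult_series (monom_s m) (Xpow j e) k = (if k = m + Poly_Mapping.single j e then 1 else 0)"
  unfolding smult_Xpow by (subst sum_monom) (auto simp: finite_sub)

lemma monom_tate: "local_field absv \<Longrightarrow> monom_s m \<in> tate absv"
  by (rule tate_finsupp) (auto simp: monom_s_def)

lemma gen_step:
  assumes a: "local_field absv"
  shows "(\<lambda>k. monom_s (m + Poly_Mapping.single j q) k - monom_s (m + Poly_Mapping.single j 1) k) \<in> gen_ideal_q absv q"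
proof -
  have eq: "(\<lambda>k. monom_s (m + Poly_Mapping.single j q) k - monom_s (m + Poly_Mapping.single j 1) k) =
        (\<lambda>k. \<Sum>j'\<in>{j}. smult_series ((\<lambda>_. monom_s m) j') (ssub (Xpow j' q) (Xpow j' 1)) k)"
  proof
    fix k
    have "smult_series (monom_s m) (ssub (Xpow j q) (Xpow j 1)) k =
          smult_series (monom_s m) (Xpow j q) k - smult_series (monom_s m) (Xpow j 1) k"
      unfolding smult_series_def ssub_def by (simp add: sum_subtractf algebra_simps)
    then have e1: "smult_series (monom_s m) (ssub (Xpow j q) (Xpow j 1)) k =
       (if k = m + Poly_Mapping.single j q then 1 else 0) - (if k = m + Poly_Mapping.single j 1 then 1 else 0)"
      by (simp only: smult_monom_Xpow)
    have e2: "monom_s (m + Poly_Mapping.single j q) k - monom_s (m + Poly_Mapping.single j 1) k =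
       (if k = m + Poly_Mapping.single j q then 1 else 0) - (if k = m + Poly_Mapping.single j 1 then 1 else 0)"
      by (simp add: monom_s_def)
    show "monom_s (m + Poly_Mapping.single j q) k - monom_s (m + Poly_Mapping.single j 1) k =
        (\<Sum>j'\<in>{j}. smult_series ((\<lambda>_. monom_s m) j') (ssub (Xpow j' q) (Xpow j' 1)) k)"
      using trans[OF e2 e1[symmetric]] by simp
  qed
  show ?thesis unfolding gen_ideal_q_def
    by (rule CollectI, rule exI[of _ "{j}"], rule exI[of _ "\<lambda>_. monom_s m"]) (use monom_tate[OF a] eq in simp)
qed

section \<open>Reduction of exponents\<close>

definition rr :: "nat \<Rightarrow> nat \<Rightarrow> nat" where
  "rr q e = (if e = 0 then 0 else (e - 1) mod (q - 1) + 1)"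

definition red :: "nat \<Rightarrow> (nat \<Rightarrow>\<^sub>0 nat) \<Rightarrow> (nat \<Rightarrow>\<^sub>0 nat)" where
  "red q i = Poly_Mapping.map (rr q) i"

lemma lookup_red: "Poly_Mapping.lookup (red q i) x = rr q (Poly_Mapping.lookup i x)"
  unfolding red_def Poly_Mapping.map.rep_eq by (simp add: when_def rr_def)

lemma rr_le: "q \<ge> 2 \<Longrightarrow> rr q e \<le> q - 1"
proof -
  assume q: "q \<ge> 2"
  have "(e - 1) mod (q - 1) < q - 1" using q by simp
  then show ?thesis unfolding rr_def by auto
qed

lemma rr_id: "q \<ge> 2 \<Longrightarrow> e \<le> q - 1 \<Longrightarrow> rr q e = e"
  unfolding rr_def by auto

lemma rr_shift: "q \<ge> 2 \<Longrightarrow> rr q (a + q) = rr q (a + 1)"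
proof -
  assume q: "q \<ge> 2"
  have "a + q - 1 = a + (q - 1)" using q by simp
  then have "(a + q - 1) mod (q - 1) = a mod (q - 1)" by simp
  then show ?thesis unfolding rr_def using q by simp
qed

definition simpl :: "nat \<Rightarrow> (nat \<Rightarrow>\<^sub>0 nat) \<Rightarrow> bool" where
  "simpl q i \<longleftrightarrow> (\<forall>j. Poly_Mapping.lookup i j \<le> q - 1)"

lemma red_simpl: "q \<ge> 2 \<Longrightarrow> simpl q (red q i)"
  unfolding simpl_def lookup_red using rr_le by blast

lemma red_id: "q \<ge> 2 \<Longrightarrow> simpl q i \<Longrightarrow> red q i = i"
  by (rule poly_mapping_eqI) (simp add: lookup_red simpl_def rr_id)

lemma red_shift: "q \<ge> 2 \<Longrightarrow> red q (m + Poly_Mapping.single j q) = red q (m + Poly_Mapping.single j 1)"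
  by (rule poly_mapping_eqI)
     (auto simp: lookup_red Poly_Mapping.lookup_add Poly_Mapping.lookup_single when_def rr_shift)

lemma sum_lookup_add_single:
  assumes "finite K" "j \<in> K"
  shows "sum (Poly_Mapping.lookup (m + Poly_Mapping.single j e)) K = sum (Poly_Mapping.lookup m) K + e"
proof -
  have "sum (Poly_Mapping.lookup (m + Poly_Mapping.single j e)) K =
        sum (Poly_Mapping.lookup m) K + sum (\<lambda>x. if j = x then e else 0) K"
    by (simp add: Poly_Mapping.lookup_add Poly_Mapping.lookup_single when_def sum.distrib)
  also have "sum (\<lambda>x. if j = x then e else 0) K = e" using assms by (simp add: sum.delta)
  finally show ?thesis .
qed

lemma gen_red_aux:
  assumes a: "local_field absv" and q: "q \<ge> 2" and K: "finite K"
  shows "Poly_Mapping.keys i \<subseteq> K \<Longrightarrow> sum (Poly_Mapping.lookup i) K = n \<Longrightarrow>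
    (\<lambda>k. monom_s i k - monom_s (red q i) k) \<in> gen_ideal_q absv q"
proof (induction n arbitrary: i rule: less_induct)
  case (less n)
  show ?case
  proof (cases "simpl q i")
    case True
    then show ?thesis using red_id[OF q True] gen_zero[OF a] by simp
  next
    case False
    then obtain j where "\<not> Poly_Mapping.lookup i j \<le> q - 1" unfolding simpl_def by blast
    then have j: "Poly_Mapping.lookup i j \<ge> q" using q by linarith
    define m where "m = i - Poly_Mapping.single j q"
    have im: "i = m + Poly_Mapping.single j q"
    proof (rule poly_mapping_eqI)
      fix x
      show "Poly_Mapping.lookup i x = Poly_Mapping.lookup (m + Poly_Mapping.single j q) x"
      proof (cases "x = j")
        case True
        then show ?thesis using j unfolding m_def Poly_Mapping.lookup_add Poly_Mapping.lookup_minus by simp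
      next
        case False
        then show ?thesis unfolding m_def Poly_Mapping.lookup_add Poly_Mapping.lookup_minus
          by (simp add: Poly_Mapping.lookup_single_not_eq)
      qed
    qed
    define i' where "i' = m + Poly_Mapping.single j 1"
    have jK: "j \<in> K" using less.prems(1) j q by (auto simp: Poly_Mapping.in_keys_iff)
    have keys': "Poly_Mapping.keys i' \<subseteq> K"
    proof
      fix x assume "x \<in> Poly_Mapping.keys i'"
      then have "Poly_Mapping.lookup m x + Poly_Mapping.lookup (Poly_Mapping.single j 1) x \<noteq> 0"
        by (simp add: i'_def Poly_Mapping.in_keys_iff Poly_Mapping.lookup_add)
      then have "Poly_Mapping.lookup m x \<noteq> 0 \<or> x = j"
        by (cases "x = j") (auto simp: Poly_Mapping.lookup_single_not_eq)
      then show "x \<in> K"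
      proof
        assume "Poly_Mapping.lookup m x \<noteq> 0"
        then have "Poly_Mapping.lookup i x \<noteq> 0" by (simp add: im Poly_Mapping.lookup_add)
        then show ?thesis using less.prems(1) by (auto simp: Poly_Mapping.in_keys_iff)
      qed (use jK in simp)
    qed
    have "sum (Poly_Mapping.lookup i') K < n"
      using less.prems(2) q unfolding im i'_def by (simp add: sum_lookup_add_single[OF K jK])
    then have IH: "(\<lambda>k. monom_s i' k - monom_s (red q i') k) \<in> gen_ideal_q absv q"
      using less.IH keys' by blast
    have rd: "red q i' = red q i" unfolding i'_def im using red_shift[OF q] by simp
    have st: "(\<lambda>k. monom_s i k - monom_s i' k) \<in> gen_ideal_q absv q"
      unfolding im i'_def by (rule gen_step[OF a])
    show ?thesis using gen_add[OF a st IH] rd by simp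
  qed
qed

lemma gen_red:
  assumes a: "local_field absv" and q: "q \<ge> 2"
  shows "(\<lambda>k. monom_s i k - monom_s (red q i) k) \<in> gen_ideal_q absv q"
  using gen_red_aux[OF a q, of "Poly_Mapping.keys i" i] by simp




lemma max_le_trans: "(x::real) \<le> max a b \<Longrightarrow> a \<le> A \<Longrightarrow> b \<le> B \<Longrightarrow> x \<le> max A B"
  by (auto simp: max_def split: if_splits)
lemma max_lt_trans: "(x::real) \<le> max a b \<Longrightarrow> a < c \<Longrightarrow> b < c \<Longrightarrow> x < c"
  by (auto simp: max_def split: if_splits)
lemma max_le_trans2: "(x::real) \<le> max a b \<Longrightarrow> a \<le> c \<Longrightarrow> b \<le> c \<Longrightarrow> x \<le> c"
  by (auto simp: max_def split: if_splits)

lemma bdd_ex: "bdd_above (range (\<lambda>i. absv (f i))) \<Longrightarrow> \<exists>B. \<forall>i. absv (f i) \<le> B"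
  unfolding bdd_above_def by auto

lemma bdd_ssub:
  assumes a: "local_field absv" and "bdd_above (range (\<lambda>i. absv (f i)))" "bdd_above (range (\<lambda>i. absv (g i)))"
  shows "bdd_above (range (\<lambda>i. absv (ssub f g i)))"
proof -
  obtain B1 where B1: "\<forall>i. absv (f i) \<le> B1" using bdd_ex[of absv f, OF assms(2)] by blast
  obtain B2 where B2: "\<forall>i. absv (g i) \<le> B2" using bdd_ex[of absv g, OF assms(3)] by blast
  have "absv (ssub f g i) \<le> max B1 B2" for i
    using max_le_trans[OF lf_ultra_diff[OF a, of "f i" "g i"]] B1 B2 unfolding ssub_def by blast
  then show ?thesis by (rule bdd_ptwise)
qed

lemma sum_sub_less:
  assumes a: "local_field absv" and "\<And>i. absv (h i) < c" "0 < c"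
  shows "absv (sum h {m :: nat \<Rightarrow>\<^sub>0 nat. m + s = k}) < c"
  by (rule lf_sum_less[OF a]) (use assms in auto)

lemma smult_Z_le:
  assumes a: "local_field absv" and "\<And>i. absv (h i) \<le> B"
  shows "absv (smult_series h (ssub (Xpow j q) (Xpow j 1)) k) \<le> B"
  unfolding smult_Z
  by (rule max_le_trans2[OF lf_ultra_diff[OF a]]) (rule sum_sub_bound[OF a assms(2)])+

lemma smult_Z_less:
  assumes a: "local_field absv" and "\<And>i. absv (h i) < c" "0 < c"
  shows "absv (smult_series h (ssub (Xpow j q) (Xpow j 1)) k) < c"
  unfolding smult_Z
  by (rule max_lt_trans[OF lf_ultra_diff[OF a]]) (rule sum_sub_less[OF a assms(2,3)])+

lemma snorm_nonneg: "local_field absv \<Longrightarrow> bdd_above (range (\<lambda>i. absv (f i))) \<Longrightarrow> 0 \<le> snorm absv f"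
  using snorm_ge[of absv f 0] lf_nonneg[of absv "f 0"] by linarith

lemma gen_bdd:
  assumes a: "local_field absv" and G: "G \<in> gen_ideal_q absv q"
  shows "bdd_above (range (\<lambda>i. absv (G i)))"
proof -
  obtain J h where J: "finite J" "\<forall>j\<in>J. h j \<in> tate absv"
    and Ge: "G = (\<lambda>k. \<Sum>j\<in>J. smult_series (h j) (ssub (Xpow j q) (Xpow j 1)) k)"
    using G unfolding gen_ideal_q_def by blast
  define C where "C = (\<Sum>j\<in>J. snorm absv (h j))"
  have ht: "h j \<in> tate absv" if "j \<in> J" for j using J(2) that by blast
  have hbd: "bdd_above (range (\<lambda>i. absv (h j i)))" if "j \<in> J" for j
    by (rule tate_bdd[OF a ht[OF that]])
  have hb: "absv (h j i) \<le> snorm absv (h j)" if "j \<in> J" for j i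
    by (rule snorm_ge[of absv "h j", OF hbd[OF that]])
  have nn: "0 \<le> snorm absv (h j)" if "j \<in> J" for j
    by (rule snorm_nonneg[of absv "h j", OF a hbd[OF that]])
  have hC: "snorm absv (h j) \<le> C" if "j \<in> J" for j
    unfolding C_def by (rule member_le_sum[OF that]) (simp_all add: nn J(1))
  have C0: "0 \<le> C" unfolding C_def by (rule sum_nonneg) (rule nn)
  have "absv (G k) \<le> C" for k
    unfolding Ge
  proof (rule lf_sum_le[OF a _ C0])
    fix j assume j: "j \<in> J"
    have "absv (smult_series (h j) (ssub (Xpow j q) (Xpow j 1)) k) \<le> snorm absv (h j)"
      by (rule smult_Z_le[OF a]) (rule hb[OF j])
    then show "absv (smult_series (h j) (ssub (Xpow j q) (Xpow j 1)) k) \<le> C" using hC[OF j] by linarith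
  qed
  then show ?thesis by (rule bdd_ptwise)
qed

section \<open>Closure properties of Iq\<close>

lemma Iq_tate: "h \<in> Iq absv q \<Longrightarrow> h \<in> tate absv"
  unfolding Iq_def by blast

lemma snorm_zero: "snorm absv (\<lambda>i. 0) = absv 0"
  unfolding snorm_def by simp

lemma Iq_zero: assumes a: "local_field absv" shows "(\<lambda>i. 0) \<in> Iq absv q"
  unfolding Iq_def
proof (safe)
  show "(\<lambda>i. 0) \<in> tate absv" by (rule tate_zero[OF a])
  fix e :: real assume "e > 0"
  have "snorm absv (ssub (\<lambda>i. 0) (\<lambda>i. 0)) < e"
    using \<open>e > 0\<close> lf_zero[OF a, of 0] by (simp add: ssub_def snorm_zero)
  then show "\<exists>g\<in>gen_ideal_q absv q. snorm absv (ssub (\<lambda>i. 0) g) < e"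
    using gen_zero[OF a] by blast
qed

lemma Iq_sub:
  assumes a: "local_field absv" and f: "f \<in> Iq absv q" and g: "g \<in> Iq absv q"
  shows "ssub f g \<in> Iq absv q"
  unfolding Iq_def
proof (safe)
  show "ssub f g \<in> tate absv" using tate_sub[OF a] Iq_tate f g by blast
  fix e :: real assume e: "e > 0"
  obtain G1 where G1: "G1 \<in> gen_ideal_q absv q" "snorm absv (ssub f G1) < e"
    using f e unfolding Iq_def by blast
  obtain G2 where G2: "G2 \<in> gen_ideal_q absv q" "snorm absv (ssub g G2) < e"
    using g e unfolding Iq_def by blast
  have b1: "bdd_above (range (\<lambda>i. absv (ssub f G1 i)))"
    by (rule bdd_ssub[OF a tate_bdd[OF a Iq_tate[OF f]] gen_bdd[OF a G1(1)]])
  have b2: "bdd_above (range (\<lambda>i. absv (ssub g G2 i)))"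
    by (rule bdd_ssub[OF a tate_bdd[OF a Iq_tate[OF g]] gen_bdd[OF a G2(1)]])
  have "absv (ssub (ssub f g) (\<lambda>k. G1 k - G2 k) i) \<le> max (snorm absv (ssub f G1)) (snorm absv (ssub g G2))" for i
  proof -
    have "ssub (ssub f g) (\<lambda>k. G1 k - G2 k) i = ssub f G1 i - ssub g G2 i"
      by (simp add: ssub_def algebra_simps)
    then show ?thesis using max_le_trans[OF lf_ultra_diff[OF a, of "ssub f G1 i" "ssub g G2 i"]
        snorm_ge[of absv "ssub f G1", OF b1, of i] snorm_ge[of absv "ssub g G2", OF b2, of i]] by simp
  qed
  then have "snorm absv (ssub (ssub f g) (\<lambda>k. G1 k - G2 k)) < e"
    using snorm_le[of absv "ssub (ssub f g) (\<lambda>k. G1 k - G2 k)"] G1(2) G2(2)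
    by (meson le_less_trans max_less_iff_conj)
  then show "\<exists>G\<in>gen_ideal_q absv q. snorm absv (ssub (ssub f g) G) < e"
    using gen_sub[OF a G1(1) G2(1)] by blast
qed

lemma Iq_neg: "local_field absv \<Longrightarrow> f \<in> Iq absv q \<Longrightarrow> (\<lambda>i. - f i) \<in> Iq absv q"
  using Iq_sub[of absv "\<lambda>i. 0" q f] Iq_zero[of absv q] by (simp add: ssub_def)

lemma Iq_add: "local_field absv \<Longrightarrow> f \<in> Iq absv q \<Longrightarrow> g \<in> Iq absv q \<Longrightarrow> sadd f g \<in> Iq absv q"
  using Iq_sub[of absv f q "\<lambda>i. - g i"] Iq_neg[of absv g q] by (simp add: ssub_def sadd_def)




lemma shift_sum:
  fixes t :: "(nat \<Rightarrow>\<^sub>0 nat) \<Rightarrow> 'a::field"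
  assumes A: "finite A" and H: "finite H" and tH: "\<And>m. m \<notin> H \<Longrightarrow> t m = 0"
    and sub: "\<And>m. m \<in> H \<Longrightarrow> m + s \<in> A"
  shows "(\<Sum>i\<in>{i\<in>A. red q i = k}. sum t {m. m + s = i}) = (\<Sum>m\<in>H. if red q (m + s) = k then t m else 0)"
proof -
  let ?A' = "{i\<in>A. red q i = k}"
  have fA': "finite ?A'" using A by simp
  have s1: "sum t {m. m + s = i} = (\<Sum>m\<in>{m. m \<in> H \<and> m + s = i}. t m)" for i
    by (rule sum.mono_neutral_right) (auto simp: finite_sub, meson tH)
  have "(\<Sum>i\<in>?A'. sum t {m. m + s = i}) = (\<Sum>i\<in>?A'. \<Sum>m\<in>{m. m \<in> H \<and> m + s = i}. t m)"
    using s1 by simp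
  also have "\<dots> = (\<Sum>m\<in>H. \<Sum>i\<in>{i. i \<in> ?A' \<and> m + s = i}. t m)"
    by (rule sum.swap_restrict[OF fA' H])
  also have "\<dots> = (\<Sum>m\<in>H. if red q (m + s) = k then t m else 0)"
  proof (rule sum.cong[OF refl])
    fix m assume m: "m \<in> H"
    have "{i. i \<in> ?A' \<and> m + s = i} = (if red q (m + s) = k then {m + s} else {})"
      using sub[OF m] by auto
    then show "(\<Sum>i\<in>{i. i \<in> ?A' \<and> m + s = i}. t m) = (if red q (m + s) = k then t m else 0)"
      by simp
  qed
  finally show ?thesis .
qed

lemma key:
  assumes a: "local_field absv" and q: "q \<ge> 2" and d: "d \<in> tate absv"
    and ds: "\<And>i. d i \<noteq> 0 \<Longrightarrow> simpl q i" and h: "h \<in> Iq absv q"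
  shows "snorm absv d \<le> snorm absv (sadd d h)"
proof -
  have bdh: "bdd_above (range (\<lambda>i. absv (sadd d h i)))"
    by (rule tate_bdd[OF a tate_sadd[OF a d Iq_tate[OF h]]])
  define s where "s = snorm absv (sadd d h)"
  have "absv (d k) \<le> s" for k
  proof (rule ccontr)
    assume "\<not> absv (d k) \<le> s"
    define c where "c = absv (d k)"
    have cs: "s < c" using \<open>\<not> absv (d k) \<le> s\<close> c_def by simp
    have s0: "0 \<le> s" unfolding s_def by (rule snorm_nonneg[OF a bdh])
    have cpos: "0 < c" using cs s0 by simp
    have dk: "d k \<noteq> 0" using cpos lf_zero[OF a, of 0] c_def by auto
    have rk: "red q k = k" using red_id[OF q ds[OF dk]] .
    obtain G where G: "G \<in> gen_ideal_q absv q" "snorm absv (ssub h G) < c"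
      using h cpos unfolding Iq_def by blast
    have bhG: "bdd_above (range (\<lambda>i. absv (ssub h G i)))"
      by (rule bdd_ssub[OF a tate_bdd[OF a Iq_tate[OF h]] gen_bdd[OF a G(1)]])
    have hG: "absv (h i - G i) < c" for i
      using snorm_ge[of absv "ssub h G", OF bhG, of i] G(2) unfolding ssub_def by simp
    have dh: "absv (d i + h i) \<le> s" for i
      using snorm_ge[of absv "sadd d h", OF bdh, of i] unfolding sadd_def s_def by simp
    obtain J hj where J: "finite J" "\<forall>j\<in>J. hj j \<in> tate absv"
      and Ge: "G = (\<lambda>k. \<Sum>j\<in>J. smult_series (hj j) (ssub (Xpow j q) (Xpow j 1)) k)"
      using G(1) unfolding gen_ideal_q_def by blast
    define t where "t j = (\<lambda>i. if c \<le> absv (hj j i) then hj j i else 0)" for j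
    define H where "H j = {i. c \<le> absv (hj j i)}" for j
    have finH: "finite (H j)" if "j \<in> J" for j
    proof -
      have "hj j \<in> tate absv" using J(2) that by blast
      then show ?thesis unfolding H_def tate_def using cpos by blast
    qed
    have tH: "t j m = 0" if "m \<notin> H j" for j m using that unfolding t_def H_def by simp
    define p where "p i = (\<Sum>j\<in>J. smult_series (t j) (ssub (Xpow j q) (Xpow j 1)) i)" for i
    have Gp: "absv (G i - p i) < c" for i
    proof -
      have "G i - p i = (\<Sum>j\<in>J. smult_series (\<lambda>m. hj j m - t j m) (ssub (Xpow j q) (Xpow j 1)) i)"
        unfolding Ge p_def smult_diff1 sum_subtractf ..
      also have "absv \<dots> < c"
      proof (rule lf_sum_less[OF a _ cpos])
        fix j assume "j \<in> J"
        have "absv (hj j m - t j m) < c" for m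
          using cpos lf_zero[OF a, of 0] by (cases "c \<le> absv (hj j m)") (auto simp: t_def)
        then show "absv (smult_series (\<lambda>m. hj j m - t j m) (ssub (Xpow j q) (Xpow j 1)) i) < c"
          by (rule smult_Z_less[OF a _ cpos])
      qed
      finally show ?thesis .
    qed
    have dp: "absv (d i + p i) < c" for i
    proof -
      have e: "d i + p i = (d i + h i) + - ((h i - G i) + (G i - p i))" by (simp add: algebra_simps)
      have "absv ((h i - G i) + (G i - p i)) < c"
        by (rule max_lt_trans[OF lf_ultra[OF a]]) (rule hG, rule Gp)
      then have "absv (- ((h i - G i) + (G i - p i))) < c"
        using lf_minus[OF a, of "(h i - G i) + (G i - p i)"] by (simp only:)
      moreover have "absv (d i + h i) < c" using dh[of i] cs by simp
      ultimately show ?thesis unfolding e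
        by (rule max_lt_trans[OF lf_ultra[OF a], rotated])
    qed
    define A where "A = insert k (\<Union>j\<in>J. (\<lambda>m. m + Poly_Mapping.single j q) ` H j \<union> (\<lambda>m. m + Poly_Mapping.single j 1) ` H j)"
    have fA: "finite A" unfolding A_def using J(1) finH by auto
    define A' where "A' = {i\<in>A. red q i = k}"
    have fA': "finite A'" unfolding A'_def using fA by simp
    have kA': "k \<in> A'" unfolding A'_def A_def using rk by simp
    have psum: "(\<Sum>i\<in>A'. p i) = 0"
    proof -
      have "(\<Sum>i\<in>A'. p i) = (\<Sum>i\<in>A'. \<Sum>j\<in>J. sum (t j) {m. m + Poly_Mapping.single j q = i} - sum (t j) {m. m + Poly_Mapping.single j 1 = i})"
        unfolding p_def smult_Z ..
      also have "\<dots> = (\<Sum>j\<in>J. (\<Sum>i\<in>A'. sum (t j) {m. m + Poly_Mapping.single j q = i}) - (\<Sum>i\<in>A'. sum (t j) {m. m + Poly_Mapping.single j 1 = i}))"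
        by (subst sum.swap) (simp add: sum_subtractf)
      also have "\<dots> = (\<Sum>j\<in>J. (\<Sum>m\<in>H j. if red q (m + Poly_Mapping.single j q) = k then t j m else 0)
                                - (\<Sum>m\<in>H j. if red q (m + Poly_Mapping.single j 1) = k then t j m else 0))"
      proof (rule sum.cong[OF refl])
        fix j assume j: "j \<in> J"
        have sq: "m + Poly_Mapping.single j q \<in> A" if "m \<in> H j" for m unfolding A_def using j that by blast
        have s1: "m + Poly_Mapping.single j 1 \<in> A" if "m \<in> H j" for m unfolding A_def using j that by blast
        show "(\<Sum>i\<in>A'. sum (t j) {m. m + Poly_Mapping.single j q = i}) - (\<Sum>i\<in>A'. sum (t j) {m. m + Poly_Mapping.single j 1 = i}) =
             (\<Sum>m\<in>H j. if red q (m + Poly_Mapping.single j q) = k then t j m else 0)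
                                - (\<Sum>m\<in>H j. if red q (m + Poly_Mapping.single j 1) = k then t j m else 0)"
          unfolding A'_def
          using shift_sum[OF fA finH[OF j] tH sq, where q=q and k=k] shift_sum[OF fA finH[OF j] tH s1, where q=q and k=k] by simp
      qed
      also have "\<dots> = 0" by (simp add: red_shift[OF q])
      finally show ?thesis .
    qed
    have dsum: "(\<Sum>i\<in>A'. d i) = d k"
    proof -
      have "(\<Sum>i\<in>A'. d i) = d k + (\<Sum>i\<in>A' - {k}. d i)" by (rule sum.remove[OF fA' kA'])
      moreover have "(\<Sum>i\<in>A' - {k}. d i) = 0"
      proof (rule sum.neutral, rule ballI)
        fix i assume i: "i \<in> A' - {k}"
        show "d i = 0"
        proof (rule ccontr)
          assume "d i \<noteq> 0"
          then have "red q i = i" using red_id[OF q ds] by blast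
          then show False using i unfolding A'_def by auto
        qed
      qed
      ultimately show ?thesis by simp
    qed
    have "(\<Sum>i\<in>A'. d i + p i) = d k" using dsum psum by (simp add: sum.distrib)
    moreover have "absv (\<Sum>i\<in>A'. d i + p i) < c" by (rule lf_sum_less[OF a dp cpos])
    ultimately show False using c_def by simp
  qed
  then show ?thesis unfolding s_def snorm_def[of absv d] by (intro cSUP_least) auto
qed




lemma q_ge2:
  assumes a: "local_field absv"
  shows "card (residue_field absv) \<ge> 2"
proof -
  define R where "R = {(x, y). absv x \<le> 1 \<and> absv y \<le> 1 \<and> absv (x - y) < (1::real)}"
  have fin: "finite (residue_field absv)" using a unfolding local_field_def by blast
  have rf: "residue_field absv = {x. absv x \<le> 1} // R" unfolding residue_field_def R_def ..
  have one: "absv 1 = 1" by (rule lf_one[OF a])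
  have z: "absv 0 = 0" using lf_zero[OF a, of 0] by simp
  have m1: "absv (0 - 1) = 1" using lf_minus[OF a, of 1] one by simp
  have c0: "R `` {0} \<in> residue_field absv" unfolding rf by (rule quotientI) (simp add: z)
  have c1: "R `` {1} \<in> residue_field absv" unfolding rf by (rule quotientI) (simp add: one)
  have "1 \<in> R `` {1}" unfolding R_def using one z by simp
  moreover have "1 \<notin> R `` {0}" unfolding R_def using m1 by simp
  ultimately have ne: "R `` {0} \<noteq> R `` {1}" by blast
  have "card {R `` {0}, R `` {1}} \<le> card (residue_field absv)"
    by (rule card_mono[OF fin]) (use c0 c1 in blast)
  then show ?thesis using ne by simp
qed

lemma small_n: "(e::real) > 0 \<Longrightarrow> \<exists>n::nat. 1 / (real n + 1) < e"
proof -
  assume e: "e > 0"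
  obtain n :: nat where n: "1 / e < real n" using reals_Archimedean2 by blast
  have "1 / (real n + 1) < e" using e n by (simp add: field_simps)
  then show ?thesis by blast
qed

lemma le_zero_small: "(\<And>n::nat. (x::real) < 1 / (real n + 1)) \<Longrightarrow> x \<le> 0"
  using small_n[of x] by (meson less_asym not_le)

lemma exist:
  assumes a: "local_field absv" and q: "q \<ge> 2" and f: "f \<in> tate absv"
  shows "\<exists>g. g \<in> tate absv \<and> (\<forall>i. g i \<noteq> 0 \<longrightarrow> simpl q i) \<and> ssub f g \<in> Iq absv q"
proof -
  define T where "T n = {i. 1 / (real n + 1) \<le> absv (f i)}" for n :: nat
  have finT: "finite (T n)" for n unfolding T_def using f unfolding tate_def by simp
  define s where "s n k = sum f {i \<in> T n. red q i = k}" for n k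
  have Tmono: "T n \<subseteq> T m" if "n \<le> m" for n m
  proof -
    have "1 / (real m + 1) \<le> 1 / (real n + 1)" using that by (simp add: frac_le)
    then show ?thesis unfolding T_def by auto
  qed
  have cb: "absv (s m k - s n k) < 1 / (real n + 1)" if "n \<le> m" for n m k
  proof -
    have sub: "{i \<in> T n. red q i = k} \<subseteq> {i \<in> T m. red q i = k}" using Tmono[OF that] by auto
    have "s m k = s n k + sum f ({i \<in> T m. red q i = k} - {i \<in> T n. red q i = k})"
      unfolding s_def using sum.subset_diff[OF sub] finT[of m] by (simp add: add.commute)
    then have "s m k - s n k = sum f ({i \<in> T m. red q i = k} - {i \<in> T n. red q i = k})" by simp
    also have "absv \<dots> < 1 / (real n + 1)"
      by (rule lf_sum_less[OF a]) (auto simp: T_def not_le)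
    finally show ?thesis .
  qed
  have cauchy: "\<forall>e>0. \<exists>N. \<forall>m\<ge>N. \<forall>n\<ge>N. absv (s m k - s n k) < e" for k
  proof (intro allI impI)
    fix e :: real assume "e > 0"
    then obtain N where N: "1 / (real N + 1) < e" using small_n by blast
    have "absv (s m k - s n k) < e" if "m \<ge> N" "n \<ge> N" for m n
    proof (cases "n \<le> m")
      case True
      have "1 / (real n + 1) \<le> 1 / (real N + 1)" using that by (simp add: frac_le)
      then show ?thesis using cb[OF True, of k] N by linarith
    next
      case False
      have "1 / (real m + 1) \<le> 1 / (real N + 1)" using that by (simp add: frac_le)
      moreover have "absv (s m k - s n k) = absv (s n k - s m k)" by (rule lf_diff_comm[OF a])
      ultimately show ?thesis using cb[of m n k] False N by linarith
    qed
    then show "\<exists>N. \<forall>m\<ge>N. \<forall>n\<ge>N. absv (s m k - s n k) < e" by blast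
  qed
  have complete: "\<forall>s::nat \<Rightarrow> 'a. (\<forall>e>0. \<exists>N. \<forall>m\<ge>N. \<forall>n\<ge>N. absv (s m - s n) < e) \<longrightarrow>
        (\<exists>L. \<forall>e>0. \<exists>N. \<forall>n\<ge>N. absv (s n - L) < e)"
    using a unfolding local_field_def by blast
  define g where "g k = (SOME L. \<forall>e>0. \<exists>N. \<forall>n\<ge>N. absv (s n k - L) < e)" for k
  have glim: "\<forall>e>0. \<exists>N. \<forall>n\<ge>N. absv (s n k - g k) < e" for k
  proof -
    have "\<exists>L. \<forall>e>0. \<exists>N. \<forall>n\<ge>N. absv (s n k - L) < e"
      using spec[OF complete, of "\<lambda>n. s n k"] cauchy[of k] by simp
    then show ?thesis unfolding g_def by (rule someI_ex)
  qed
  have gb: "absv (g k - s n k) < 1 / (real n + 1)" for k n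
  proof -
    have ep: "(0::real) < 1 / (real n + 1)" by simp
    obtain N where N: "\<forall>m\<ge>N. absv (s m k - g k) < 1 / (real n + 1)" using glim[of k] ep by blast
    define m where "m = max N n"
    have "absv (s m k - g k) < 1 / (real n + 1)" using N unfolding m_def by simp
    then have x: "absv (- (s m k - g k)) < 1 / (real n + 1)"
      using lf_minus[OF a, of "s m k - g k"] by (simp only:)
    have y: "absv (s m k - s n k) < 1 / (real n + 1)" using cb[of n m k] unfolding m_def by simp
    have "g k - s n k = - (s m k - g k) + (s m k - s n k)" by simp
    then show ?thesis using max_lt_trans[OF lf_ultra[OF a] x y] by simp
  qed
  have s0: "s n k = 0" if "k \<notin> red q ` T n" for n k
  proof -
    have e: "{i \<in> T n. red q i = k} = {}" using that by auto
    show ?thesis unfolding s_def e by (rule sum.empty)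
  qed
  have gsimp: "\<forall>i. g i \<noteq> 0 \<longrightarrow> simpl q i"
  proof (intro allI impI)
    fix k assume gk: "g k \<noteq> 0"
    show "simpl q k"
    proof (rule ccontr)
      assume ns: "\<not> simpl q k"
      have "k \<notin> red q ` T n" for n using ns red_simpl[OF q] by blast
      then have "absv (g k) < 1 / (real n + 1)" for n using gb[of k n] s0 by simp
      then have "absv (g k) \<le> 0" by (rule le_zero_small)
      then show False using gk lf_zero[OF a, of "g k"] lf_nonneg[OF a, of "g k"] by simp
    qed
  qed
  have gt: "g \<in> tate absv"
    unfolding tate_def
  proof (safe)
    fix e :: real assume "e > 0"
    then obtain n where n: "1 / (real n + 1) < e" using small_n by blast
    have "{k. e \<le> absv (g k)} \<subseteq> red q ` T n"
    proof
      fix k assume "k \<in> {k. e \<le> absv (g k)}"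
      then have ek: "e \<le> absv (g k)" by simp
      show "k \<in> red q ` T n"
      proof (rule ccontr)
        assume "k \<notin> red q ` T n"
        then have "absv (g k) < 1 / (real n + 1)" using gb[of k n] s0 by simp
        then show False using ek n by simp
      qed
    qed
    moreover have "finite (red q ` T n)" using finT by simp
    ultimately show "finite {k. e \<le> absv (g k)}" by (rule finite_subset)
  qed
  have fgI: "ssub f g \<in> Iq absv q"
    unfolding Iq_def
  proof (safe)
    show "ssub f g \<in> tate absv" by (rule tate_sub[OF a f gt])
    fix e :: real assume "e > 0"
    then obtain n where n: "1 / (real n + 1) < e" using small_n by blast
    define G where "G k = (\<Sum>i\<in>T n. f i * (monom_s i k - monom_s (red q i) k))" for k
    have Gg: "G \<in> gen_ideal_q absv q"
    proof -
      have "(\<lambda>k. \<Sum>i\<in>T n. f i * (monom_s i k - monom_s (red q i) k)) \<in> gen_ideal_q absv q"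
        by (rule gen_sum[OF a finT]) (rule gen_scale[OF a gen_red[OF a q]])
      then show ?thesis unfolding G_def by (simp add: fun_eq_iff)
    qed
    have Ge: "G k = (if k \<in> T n then f k else 0) - s n k" for k
    proof -
      have "G k = (\<Sum>i\<in>T n. f i * monom_s i k) - (\<Sum>i\<in>T n. f i * monom_s (red q i) k)"
        unfolding G_def by (simp add: sum_subtractf algebra_simps)
      moreover have "(\<Sum>i\<in>T n. f i * monom_s i k) = (if k \<in> T n then f k else 0)"
      proof -
        have "(\<Sum>i\<in>T n. f i * monom_s i k) = (\<Sum>i\<in>T n. if k = i then f i else 0)"
          unfolding monom_s_def by (rule sum.cong) auto
        also have "\<dots> = (if k \<in> T n then f k else 0)" by (rule sum.delta'[OF finT])
        finally show ?thesis .
      qed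
      moreover have "(\<Sum>i\<in>T n. f i * monom_s (red q i) k) = s n k"
      proof -
        have "(\<Sum>i\<in>T n. f i * monom_s (red q i) k) = (\<Sum>i\<in>T n. if red q i = k then f i else 0)"
          unfolding monom_s_def by (rule sum.cong) auto
        also have "\<dots> = s n k" unfolding s_def by (rule sum.inter_filter[symmetric, OF finT])
        finally show ?thesis .
      qed
      ultimately show ?thesis by simp
    qed
    have pt: "absv (ssub (ssub f g) G k) \<le> 1 / (real n + 1)" for k
    proof -
      have e1: "ssub (ssub f g) G k = (f k - (if k \<in> T n then f k else 0)) - (g k - s n k)"
        unfolding ssub_def Ge by (simp add: algebra_simps)
      have x: "absv (f k - (if k \<in> T n then f k else 0)) < 1 / (real n + 1)"
        using lf_zero[OF a, of 0] by (auto simp: T_def not_le)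
      show ?thesis unfolding e1 using max_lt_trans[OF lf_ultra_diff[OF a] x gb[of k n]] by simp
    qed
    have "snorm absv (ssub (ssub f g) G) < e"
      using snorm_le[of absv "ssub (ssub f g) G", OF pt] n by linarith
    then show "\<exists>G\<in>gen_ideal_q absv q. snorm absv (ssub (ssub f g) G) < e" using Gg by blast
  qed
  show ?thesis using gt gsimp fgI by blast
qed

lemma q_simplified_iff: "q_simplified q g \<longleftrightarrow> (\<forall>i. g i \<noteq> 0 \<longrightarrow> simpl q i)"
  unfolding q_simplified_def simpl_def by blast

theorem lemma6p1:
  fixes absv :: "'a::field \<Rightarrow> real" and q :: nat
  assumes "local_field absv"
    and "q = card (residue_field absv)"
  shows "(\<forall>f\<in>tate absv. \<exists>!g. g \<in> tate absv \<and> q_simplified q g \<and> ssub f g \<in> Iq absv q) \<and>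
         (\<forall>f g. f \<in> tate absv \<longrightarrow> g \<in> tate absv \<longrightarrow> q_simplified q g \<longrightarrow>
             ssub f g \<in> Iq absv q \<longrightarrow> res_norm absv (Iq absv q) f = snorm absv g)"
proof -
  note a = assms(1)
  have q: "q \<ge> 2" using q_ge2[OF a] assms(2) by simp
  have zero_of: "d = (\<lambda>i. 0)" if dt: "d \<in> tate absv" and ds: "\<forall>i. d i \<noteq> 0 \<longrightarrow> simpl q i"
    and dI: "d \<in> Iq absv q" for d
  proof -
    have "snorm absv d \<le> snorm absv (sadd d (\<lambda>i. - d i))"
      by (rule key[OF a q dt]) (use ds Iq_neg[OF a dI] in auto)
    also have "sadd d (\<lambda>i. - d i) = (\<lambda>i. 0)" by (simp add: sadd_def)
    finally have "snorm absv d \<le> 0" using lf_zero[OF a, of 0] by (simp add: snorm_zero)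
    then have "absv (d i) \<le> 0" for i using snorm_ge[of absv d, OF tate_bdd[OF a dt], of i] by simp
    then show ?thesis using lf_zero[OF a] lf_nonneg[OF a] by (metis antisym)
  qed
  have P1: "\<forall>f\<in>tate absv. \<exists>!g. g \<in> tate absv \<and> q_simplified q g \<and> ssub f g \<in> Iq absv q"
  proof
    fix f assume f: "f \<in> tate absv"
    obtain g where g: "g \<in> tate absv" "\<forall>i. g i \<noteq> 0 \<longrightarrow> simpl q i" "ssub f g \<in> Iq absv q"
      using exist[OF a q f] by blast
    show "\<exists>!g. g \<in> tate absv \<and> q_simplified q g \<and> ssub f g \<in> Iq absv q"
    proof (rule ex1I[of _ g])
      show "g \<in> tate absv \<and> q_simplified q g \<and> ssub f g \<in> Iq absv q" using g q_simplified_iff by blast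
    next
      fix g' assume g': "g' \<in> tate absv \<and> q_simplified q g' \<and> ssub f g' \<in> Iq absv q"
      have dt: "ssub g' g \<in> tate absv" using tate_sub[OF a] g' g(1) by blast
      have g's: "\<forall>i. g' i \<noteq> 0 \<longrightarrow> simpl q i" using g' q_simplified_iff by blast
      have ds: "\<forall>i. ssub g' g i \<noteq> 0 \<longrightarrow> simpl q i"
      proof (intro allI impI)
        fix i assume "ssub g' g i \<noteq> 0"
        then have "g' i \<noteq> 0 \<or> g i \<noteq> 0" unfolding ssub_def by auto
        then show "simpl q i" using g(2) g's by blast
      qed
      have "ssub (ssub f g) (ssub f g') \<in> Iq absv q" using Iq_sub[OF a g(3)] g' by blast
      moreover have "ssub (ssub f g) (ssub f g') = ssub g' g" by (simp add: ssub_def fun_eq_iff)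
      ultimately have dI: "ssub g' g \<in> Iq absv q" by simp
      have "ssub g' g = (\<lambda>i. 0)" by (rule zero_of[OF dt ds dI])
      then show "g' = g" by (simp add: ssub_def fun_eq_iff)
    qed
  qed
  have P2: "res_norm absv (Iq absv q) f = snorm absv g"
    if f: "f \<in> tate absv" and g: "g \<in> tate absv" and gs: "q_simplified q g" and fg: "ssub f g \<in> Iq absv q" for f g
  proof -
    have gs': "\<And>i. g i \<noteq> 0 \<Longrightarrow> simpl q i" using gs q_simplified_iff by blast
    have mem: "snorm absv g \<in> (\<lambda>h. snorm absv (sadd f h)) ` Iq absv q"
    proof
      have "(\<lambda>i. - ssub f g i) \<in> Iq absv q" by (rule Iq_neg[OF a fg])
      moreover have "(\<lambda>i. - ssub f g i) = ssub g f" by (simp add: ssub_def fun_eq_iff)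
      ultimately show "ssub g f \<in> Iq absv q" by simp
      show "snorm absv g = snorm absv (sadd f (ssub g f))" by (simp add: sadd_def ssub_def)
    qed
    have lb: "snorm absv g \<le> x" if xin: "x \<in> (\<lambda>h. snorm absv (sadd f h)) ` Iq absv q" for x
    proof -
      obtain h where h: "h \<in> Iq absv q" and x: "x = snorm absv (sadd f h)" using xin by blast
      have hI: "sadd (ssub f g) h \<in> Iq absv q" by (rule Iq_add[OF a fg h])
      have "sadd f h = sadd g (sadd (ssub f g) h)" by (simp add: sadd_def ssub_def fun_eq_iff)
      then show ?thesis using key[OF a q g gs' hI] x by simp
    qed
    show ?thesis unfolding res_norm_def by (rule cInf_eq_minimum[OF mem lb])
  qed
  show ?thesis using P1 P2 by blast
qed


end
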